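(* Let $K>1$ and let $1\le k\le n$ be integers. Let $X_1,\ldots,X_n$ be independent non-negative random variables with cumulative distribution functions $F_1,\ldots,F_n$, each satisfying condition (C) below with parameter $K$. Set $F=\frac1n\sum_{i=1}^n F_i$ and let $q=q_F\big(\frac{k-1/2}{n}\big)$ be any quantile of order $\frac{k-1/2}{n}$ of $F$. Then for every $0<t<K^{-5}$, $$\mathbb P\Big\{\operatorname{k\text{-}min}_{1\le i\le n}X_i< t\,q\Big\}\le 4\,t^{1/(4\ln K)},$$ and for every $t>K^5$, $$\mathbb P\Big\{\operatorname{k\text{-}min}_{1\le i\le n}X_i> t\,q\Big\}\le 4\,t^{-1/(6\ln K)}.$$ In particular, every median $M$ of $\operatorname{k\text{-}min}_{1\le i\le n}X_i$ satisfies $$K^{-10}\,q\le M\le K^{13}\,q.$$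
   Context: For real numbers $a_1,\ldots,a_n$ and $1\le k\le n$, $\operatorname{k\text{-}min}_{i\le n}a_i$ denotes the $k$-th smallest element of the sequence (counted with multiplicity). Condition (C) with parameter $K>1$ for the cdf $F$ of a non-negative random variable: $\frac{F(Kt)}{1-F(Kt)}\ge \frac{2F(t)}{1-F(t)}$ for all $t>0$, with the conventions $1/0=\infty$, $1/\infty=0$. For a cdf $G$ (of a random variable $\xi$) and $r\in[0,1]$, a quantile of order $r$ is any number $q_G(r)$ with $\mathbb P\{\xi<q_G(r)\}\le r$ and $\mathbb P\{\xi\le q_G(r)\}\ge r$ (not necessarily unique); for $F=\frac1n\sum F_i$ this means $F(s)\le r$ for all $s<q_F(r)$ and $F(q_F(r))\ge r$. *)

theory Defs
  imports "HOL-Probability.Probability"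
begin

definition kmin :: "nat \<Rightarrow> nat \<Rightarrow> (nat \<Rightarrow> real) \<Rightarrow> real" where
  "kmin n k a = sort (map a [0..<n]) ! (k - 1)"

definition odds :: "real \<Rightarrow> ereal" where
  "odds p = (if p = 1 then \<infinity> else ereal (p / (1 - p)))"

definition condC :: "real \<Rightarrow> (real \<Rightarrow> real) \<Rightarrow> bool" where
  "condC K F \<longleftrightarrow> (\<forall>t>0. odds (F (K * t)) \<ge> 2 * odds (F t))"

definition is_quantile :: "(real \<Rightarrow> real) \<Rightarrow> real \<Rightarrow> real \<Rightarrow> bool" where
  "is_quantile G r q \<longleftrightarrow> (\<forall>s<q. G s \<le> r) \<and> G q \<ge> r"

definition is_median :: "'a measure \<Rightarrow> ('a \<Rightarrow> real) \<Rightarrow> real \<Rightarrow> bool" where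
  "is_median P Y m \<longleftrightarrow> measure P {\<omega>\<in>space P. Y \<omega> < m} \<le> 1/2 \<and>
                        measure P {\<omega>\<in>space P. Y \<omega> \<le> m} \<ge> 1/2"

end

theory Submission
  imports Defs
begin

definition G :: "nat set \<Rightarrow> nat \<Rightarrow> (nat \<Rightarrow> real) \<Rightarrow> real" where
  "G I k p = (\<Sum>S\<in>{S. S \<subseteq> I \<and> k \<le> card S}. (\<Prod>i\<in>S. p i) * (\<Prod>i\<in>I-S. 1 - p i))"

lemma G_nonneg: "finite I \<Longrightarrow> \<forall>i\<in>I. 0 \<le> p i \<and> p i \<le> 1 \<Longrightarrow> 0 \<le> G I k p"
  unfolding G_def
  by (intro sum_nonneg mult_nonneg_nonneg prod_nonneg) auto

lemma G_mono: "finite I \<Longrightarrow> \<forall>i\<in>I. 0 \<le> p i \<and> p i \<le> 1 \<Longrightarrow> k' \<le> k \<Longrightarrow> G I k p \<le> G I k' p"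
  unfolding G_def
  by (intro sum_mono2 mult_nonneg_nonneg prod_nonneg) (auto simp: finite_subset)

lemma G_insert:
  assumes "finite I" "a \<notin> I"
  shows "G (insert a I) k p = (1 - p a) * G I k p + p a * G I (k - 1) p"
proof -
  have split: "{S. S \<subseteq> insert a I \<and> k \<le> card S} =
     {S. S \<subseteq> I \<and> k \<le> card S} \<union> insert a ` {S. S \<subseteq> I \<and> k - 1 \<le> card S}"
  proof (intro equalityI subsetI)
    fix S assume S: "S \<in> {S. S \<subseteq> insert a I \<and> k \<le> card S}"
    show "S \<in> {S. S \<subseteq> I \<and> k \<le> card S} \<union> insert a ` {S. S \<subseteq> I \<and> k - 1 \<le> card S}"
    proof (cases "a \<in> S")
      case True
      then have "S = insert a (S - {a})" by auto
      moreover have "card S = Suc (card (S - {a}))"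
        using True S assms(1) card.remove[of S a] finite_subset[of S "insert a I"] by auto
      ultimately show ?thesis using S by (intro UnI2 image_eqI[of _ _ "S - {a}"]) auto
    next
      case False
      then show ?thesis using S by auto
    qed
  next
    fix S assume "S \<in> {S. S \<subseteq> I \<and> k \<le> card S} \<union> insert a ` {S. S \<subseteq> I \<and> k - 1 \<le> card S}"
    then show "S \<in> {S. S \<subseteq> insert a I \<and> k \<le> card S}"
    proof
      assume "S \<in> insert a ` {S. S \<subseteq> I \<and> k - 1 \<le> card S}"
      then obtain T where T: "T \<subseteq> I" "k - 1 \<le> card T" "S = insert a T" by auto
      have "card S = Suc (card T)" using T assms by (metis card_insert_disjoint finite_subset subsetD)
      then show ?thesis using T by auto
    qed auto
  qed
  have fin: "finite {S. S \<subseteq> I \<and> k \<le> card S}" "finite {S. S \<subseteq> I \<and> k - 1 \<le> card S}"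
    using assms(1) by (auto intro: finite_subset[of _ "Pow I"])
  have disj: "{S. S \<subseteq> I \<and> k \<le> card S} \<inter> insert a ` {S. S \<subseteq> I \<and> k - 1 \<le> card S} = {}"
    using assms(2) by auto
  have inj: "inj_on (insert a) {S. S \<subseteq> I \<and> k - 1 \<le> card S}"
    using assms(2) unfolding inj_on_def by (metis insert_ident mem_Collect_eq subsetD)
  have t1: "(\<Prod>i\<in>S. p i) * (\<Prod>i\<in>insert a I - S. 1 - p i) = (1 - p a) * ((\<Prod>i\<in>S. p i) * (\<Prod>i\<in>I - S. 1 - p i))"
    if "S \<subseteq> I" for S
  proof -
    have "insert a I - S = insert a (I - S)" using that assms(2) by auto
    then show ?thesis using assms by simp
  qed
  have t2: "(\<Prod>i\<in>insert a S. p i) * (\<Prod>i\<in>insert a I - insert a S. 1 - p i) = p a * ((\<Prod>i\<in>S. p i) * (\<Prod>i\<in>I - S. 1 - p i))"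
    if "S \<subseteq> I" for S
  proof -
    have "insert a I - insert a S = I - S" using that assms(2) by auto
    moreover have "finite S" "a \<notin> S" using that assms finite_subset by auto
    ultimately show ?thesis by simp
  qed
  let ?f = "\<lambda>S. (\<Prod>i\<in>S. p i) * (\<Prod>i\<in>insert a I - S. 1 - p i)"
  have "G (insert a I) k p = sum ?f {S. S \<subseteq> I \<and> k \<le> card S} + sum ?f (insert a ` {S. S \<subseteq> I \<and> k - 1 \<le> card S})"
    unfolding G_def split by (rule sum.union_disjoint[OF fin(1) finite_imageI[OF fin(2)] disj])
  also have "sum ?f (insert a ` {S. S \<subseteq> I \<and> k - 1 \<le> card S}) = sum (?f \<circ> insert a) {S. S \<subseteq> I \<and> k - 1 \<le> card S}"
    by (rule sum.reindex[OF inj])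
  also have "\<dots> = p a * G I (k - 1) p"
    unfolding G_def sum_distrib_left comp_def by (intro sum.cong refl) (rule t2, auto)
  also have "sum ?f {S. S \<subseteq> I \<and> k \<le> card S} = (1 - p a) * G I k p"
    unfolding G_def sum_distrib_left by (intro sum.cong refl) (rule t1, auto)
  finally show ?thesis .
qed

lemma G_empty: "G {} k p = (if k = 0 then 1 else 0)"
proof -
  have "{S. S \<subseteq> {} \<and> k \<le> card S} = (if k = 0 then {{}} else {})" by auto
  then show ?thesis unfolding G_def by auto
qed

lemma G_bound_aux:
  fixes p u :: "nat \<Rightarrow> real" and e :: real
  assumes "finite I" and "0 < e" "e \<le> 1"
    and H: "\<forall>i\<in>I. 0 \<le> p i \<and> p i \<le> 1 \<and> 0 \<le> u i \<and> u i \<le> 1 \<and> p i * (1 - u i) \<le> e * u i * (1 - p i)"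
  shows "G I k p * (\<Prod>i\<in>I. 1 - (1 - e) * u i) \<le> e ^ k"
  using assms(1) H
proof (induction I arbitrary: k rule: finite_induct)
  case empty
  then show ?case using assms by (simp add: G_empty)
next
  case (insert a I)
  define c where "c = 1 - (1 - e) * u a"
  define Q where "Q = (\<Prod>i\<in>I. 1 - (1 - e) * u i)"
  have ha: "0 \<le> p a" "p a \<le> 1" "0 \<le> u a" "u a \<le> 1" "p a * (1 - u a) \<le> e * u a * (1 - p a)"
    using insert.prems by auto
  have pI: "\<forall>i\<in>I. 0 \<le> p i \<and> p i \<le> 1" using insert.prems by auto
  have nn: "0 \<le> 1 - (1 - e) * u i" if "i \<in> insert a I" for i
  proof -
    have "0 \<le> (1 - u i) + e * u i" using insert.prems that assms by auto
    then show ?thesis by (simp add: algebra_simps)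
  qed
  have Q0: "0 \<le> Q" unfolding Q_def using nn by (intro prod_nonneg) auto
  have IH1: "G I k p * Q \<le> e ^ k" unfolding Q_def using insert.IH insert.prems by auto
  have IH2: "G I (k - 1) p * Q \<le> e ^ (k - 1)" unfolding Q_def using insert.IH insert.prems by auto
  have g0: "0 \<le> G I k p" using G_nonneg[OF insert.hyps(1) pI] .
  have gm: "G I k p \<le> G I (k - 1) p" using G_mono[OF insert.hyps(1) pI] by simp
  have pc: "p a * c \<le> e * u a" unfolding c_def using ha(5) by (simp add: algebra_simps)
  have D0: "0 \<le> G I (k - 1) p * Q - G I k p * Q" using gm Q0 by (simp add: mult_right_mono)
  have "G (insert a I) k p * (\<Prod>i\<in>insert a I. 1 - (1 - e) * u i)
      = ((1 - p a) * G I k p + p a * G I (k - 1) p) * (c * Q)"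
    using insert.hyps by (simp add: G_insert c_def Q_def)
  also have "\<dots> = c * (G I k p * Q) + (p a * c) * (G I (k - 1) p * Q - G I k p * Q)"
    by (simp add: algebra_simps)
  also have "\<dots> \<le> c * (G I k p * Q) + (e * u a) * (G I (k - 1) p * Q - G I k p * Q)"
    using pc D0 by (intro add_left_mono mult_right_mono) auto
  also have "\<dots> = (1 - u a) * (G I k p * Q) + e * u a * (G I (k - 1) p * Q)"
    unfolding c_def by (simp add: algebra_simps)
  also have "\<dots> \<le> (1 - u a) * e ^ k + e * u a * e ^ (k - 1)"
    using IH1 IH2 ha assms by (intro add_mono mult_left_mono) auto
  also have "\<dots> \<le> e ^ k"
  proof (cases k)
    case 0
    then show ?thesis using ha assms by (simp add: algebra_simps mult_left_le_one_le)
  next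
    case (Suc m)
    then show ?thesis by (simp add: algebra_simps)
  qed
  finally show ?case .
qed

lemma G_bound:
  fixes p u :: "nat \<Rightarrow> real" and e :: real
  assumes "finite I" and "0 < e" "e \<le> 1"
    and H: "\<forall>i\<in>I. 0 \<le> p i \<and> p i \<le> 1 \<and> 0 \<le> u i \<and> u i \<le> 1 \<and> p i * (1 - u i) \<le> e * u i * (1 - p i)"
    and S: "(\<Sum>i\<in>I. u i) \<le> real k - 1/2"
  shows "G I k p \<le> e powr (1/2)"
proof -
  have cvx: "e powr u i \<le> 1 - (1 - e) * u i" if "i \<in> I" for i
  proof -
    have u: "0 \<le> u i" "u i \<le> 1" using H that by auto
    have "exp (1 * ((1 - u i) *\<^sub>R 0 + u i *\<^sub>R ln e)) \<le> (1 - u i) * exp (1 * 0) + u i * exp (1 * ln e)"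
      using convex_onD[OF convex_on_exp[of 1], of "u i" 0 "ln e"] u by simp
    then show ?thesis using assms u by (simp add: powr_def algebra_simps)
  qed
  have "e powr (real k - 1/2) \<le> e powr (\<Sum>i\<in>I. u i)"
    using S assms by (intro powr_mono') auto
  also have "\<dots> = (\<Prod>i\<in>I. e powr u i)" using assms by (simp add: powr_sum)
  also have "\<dots> \<le> (\<Prod>i\<in>I. 1 - (1 - e) * u i)"
    using cvx by (intro prod_mono) auto
  finally have P: "e powr (real k - 1/2) \<le> (\<Prod>i\<in>I. 1 - (1 - e) * u i)" .
  have pI: "\<forall>i\<in>I. 0 \<le> p i \<and> p i \<le> 1" using H by auto
  have "G I k p * e powr (real k - 1/2) \<le> G I k p * (\<Prod>i\<in>I. 1 - (1 - e) * u i)"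
    using P G_nonneg[OF assms(1) pI, of k] by (rule mult_left_mono)
  also have "\<dots> \<le> e ^ k" by (rule G_bound_aux[OF assms(1-3) H])
  also have "\<dots> = e powr (1/2) * e powr (real k - 1/2)"
    using assms by (simp add: powr_add[symmetric] powr_realpow)
  finally show ?thesis using assms by simp
qed

lemma (in prob_space) prob_count:
  fixes X :: "nat \<Rightarrow> 'a \<Rightarrow> real" and A :: "nat \<Rightarrow> real set"
  assumes ind: "indep_vars (\<lambda>_. borel) X I" and I: "finite I" "I \<noteq> {}"
    and A: "\<And>i. i \<in> I \<Longrightarrow> A i \<in> sets borel"
  shows "{\<omega>\<in>space M. k \<le> card {i\<in>I. X i \<omega> \<in> A i}} \<in> sets M \<and> prob {\<omega>\<in>space M. k \<le> card {i\<in>I. X i \<omega> \<in> A i}}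
         = G I k (\<lambda>i. prob {\<omega>\<in>space M. X i \<omega> \<in> A i})"
proof -
  have rv: "\<And>i. i \<in> I \<Longrightarrow> X i \<in> borel_measurable M" using ind unfolding indep_vars_def2 by auto
  have indS: "indep_sets (\<lambda>i. { X i -` B \<inter> space M | B. B \<in> sets borel}) I"
    using ind unfolding indep_vars_def2 by auto
  define SS where "SS = {S. S \<subseteq> I \<and> k \<le> card S}"
  define E where "E S = {\<omega>\<in>space M. \<forall>i\<in>I. X i \<omega> \<in> A i \<longleftrightarrow> i \<in> S}" for S
  define B where "B S i = (if i \<in> S then A i else - A i)" for S i
  have finSS: "finite SS" unfolding SS_def using I by (auto intro: finite_subset[of _ "Pow I"])
  have EB: "E S = (\<Inter>i\<in>I. X i -` B S i \<inter> space M)" for S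
    using I(2) unfolding E_def B_def by (auto split: if_splits)
  have Bsets: "B S i \<in> sets borel" if "i \<in> I" for S i
    using A[OF that] unfolding B_def by auto
  have Esets: "E S \<in> sets M" for S
    unfolding EB using I Bsets rv by (intro sets.finite_INT) auto
  have eq: "{\<omega>\<in>space M. k \<le> card {i\<in>I. X i \<omega> \<in> A i}} = (\<Union>S\<in>SS. E S)"
  proof (intro equalityI subsetI)
    fix x assume x: "x \<in> {\<omega>\<in>space M. k \<le> card {i\<in>I. X i \<omega> \<in> A i}}"
    then have "x \<in> E {i\<in>I. X i x \<in> A i}" "{i\<in>I. X i x \<in> A i} \<in> SS"
      unfolding SS_def E_def by auto
    then show "x \<in> (\<Union>S\<in>SS. E S)" by blast
  next
    fix x assume "x \<in> (\<Union>S\<in>SS. E S)"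
    then obtain S where S: "S \<in> SS" "x \<in> E S" by blast
    from S(2) have x: "x \<in> space M" "\<forall>i\<in>I. X i x \<in> A i \<longleftrightarrow> i \<in> S" unfolding E_def by auto
    from S(1) have S2: "S \<subseteq> I" "k \<le> card S" unfolding SS_def by auto
    have "{i\<in>I. X i x \<in> A i} = S" using x(2) S2(1) by blast
    then show "x \<in> {\<omega>\<in>space M. k \<le> card {i\<in>I. X i \<omega> \<in> A i}}"
      using x S2 by simp
  qed
  have disj: "disjoint_family_on E SS"
    unfolding disjoint_family_on_def
  proof (intro ballI impI)
    fix S T assume ST: "S \<in> SS" "T \<in> SS" "S \<noteq> T"
    show "E S \<inter> E T = {}"
    proof (rule ccontr)
      assume "E S \<inter> E T \<noteq> {}"
      then obtain x where x: "x \<in> E S" "x \<in> E T" by blast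
      have a1: "\<forall>i\<in>I. X i x \<in> A i \<longleftrightarrow> i \<in> S" "\<forall>i\<in>I. X i x \<in> A i \<longleftrightarrow> i \<in> T"
        using x unfolding E_def by simp_all
      have a2: "S \<subseteq> I" "T \<subseteq> I" using ST unfolding SS_def by simp_all
      have "S = {i\<in>I. X i x \<in> A i}" using a1(1) a2(1) by blast
      moreover have "T = {i\<in>I. X i x \<in> A i}" using a1(2) a2(2) by blast
      ultimately show False using ST(3) by simp
    qed
  qed
  have cmpl: "prob {\<omega>\<in>space M. X i \<omega> \<notin> A i} = 1 - prob {\<omega>\<in>space M. X i \<omega> \<in> A i}" if "i \<in> I" for i
  proof -
    have "{\<omega>\<in>space M. X i \<omega> \<notin> A i} = space M - {\<omega>\<in>space M. X i \<omega> \<in> A i}" by auto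
    moreover have "{\<omega>\<in>space M. X i \<omega> \<in> A i} \<in> sets M"
      using measurable_sets[OF rv[OF that] A[OF that]] by (simp add: vimage_def Int_def conj_commute)
    ultimately show ?thesis using prob_compl by simp
  qed
  have probE: "prob (E S) = (\<Prod>i\<in>S. prob {\<omega>\<in>space M. X i \<omega> \<in> A i}) * (\<Prod>i\<in>I - S. 1 - prob {\<omega>\<in>space M. X i \<omega> \<in> A i})"
    if "S \<in> SS" for S
  proof -
    have SI: "S \<subseteq> I" using that unfolding SS_def by auto
    have "prob (E S) = (\<Prod>i\<in>I. prob (X i -` B S i \<inter> space M))"
      unfolding EB
    proof (rule indep_setsD[OF indS])
      show "\<forall>j\<in>I. X j -` B S j \<inter> space M \<in> {X j -` B \<inter> space M | B. B \<in> sets borel}"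
        using Bsets by blast
    qed (use I in auto)
    also have "\<dots> = (\<Prod>i\<in>S. prob (X i -` B S i \<inter> space M)) * (\<Prod>i\<in>I - S. prob (X i -` B S i \<inter> space M))"
      using prod.subset_diff[OF SI I(1)] by (simp add: mult.commute)
    also have "(\<Prod>i\<in>S. prob (X i -` B S i \<inter> space M)) = (\<Prod>i\<in>S. prob {\<omega>\<in>space M. X i \<omega> \<in> A i})"
    proof (intro prod.cong refl)
      fix i assume "i \<in> S"
      then have "X i -` B S i \<inter> space M = {\<omega>\<in>space M. X i \<omega> \<in> A i}" unfolding B_def by auto
      then show "prob (X i -` B S i \<inter> space M) = prob {\<omega>\<in>space M. X i \<omega> \<in> A i}" by simp
    qed
    also have "(\<Prod>i\<in>I - S. prob (X i -` B S i \<inter> space M)) = (\<Prod>i\<in>I - S. 1 - prob {\<omega>\<in>space M. X i \<omega> \<in> A i})"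
    proof (intro prod.cong refl)
      fix i assume i: "i \<in> I - S"
      have "X i -` B S i \<inter> space M = {\<omega>\<in>space M. X i \<omega> \<notin> A i}" using i unfolding B_def by auto
      then show "prob (X i -` B S i \<inter> space M) = 1 - prob {\<omega>\<in>space M. X i \<omega> \<in> A i}" using cmpl i by auto
    qed
    finally show ?thesis .
  qed
  have "prob (\<Union>S\<in>SS. E S) = (\<Sum>S\<in>SS. prob (E S))"
    using Esets by (intro finite_measure_finite_Union[OF finSS _ disj]) auto
  also have "\<dots> = G I k (\<lambda>i. prob {\<omega>\<in>space M. X i \<omega> \<in> A i})"
    unfolding G_def SS_def[symmetric] using probE by (intro sum.cong refl) simp
  finally have "prob {\<omega>\<in>space M. k \<le> card {i\<in>I. X i \<omega> \<in> A i}} = G I k (\<lambda>i. prob {\<omega>\<in>space M. X i \<omega> \<in> A i})" unfolding eq .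
  moreover have "{\<omega>\<in>space M. k \<le> card {i\<in>I. X i \<omega> \<in> A i}} \<in> sets M"
    unfolding eq using finSS Esets by (intro sets.finite_UN) auto
  ultimately show ?thesis by simp
qed

lemma kmin_iff:
  fixes a :: "nat \<Rightarrow> real"
  assumes "1 \<le> k" "k \<le> n" and down: "\<And>x y. Q y \<Longrightarrow> x \<le> y \<Longrightarrow> Q x"
  shows "Q (kmin n k a) \<longleftrightarrow> k \<le> card {i. i < n \<and> Q (a i)}"
proof -
  define xs where "xs = sort (map a [0..<n])"
  have len: "length xs = n" unfolding xs_def by simp
  have srt: "sorted xs" unfolding xs_def by simp
  have "length (filter Q xs) = length (filter Q (map a [0..<n]))"
    unfolding xs_def by (simp add: filter_sort)
  also have "\<dots> = card {i. i < n \<and> Q (a i)}"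
    by (simp add: filter_map length_filter_conv_card cong: conj_cong)
  finally have c1: "card {i. i < n \<and> Q (a i)} = card {i. i < n \<and> Q (xs ! i)}"
    by (simp add: length_filter_conv_card len)
  have fin: "finite {i. i < n \<and> Q (xs ! i)}" by simp
  have "Q (xs ! (k - 1)) \<longleftrightarrow> k \<le> card {i. i < n \<and> Q (xs ! i)}"
  proof
    assume q: "Q (xs ! (k - 1))"
    have "{..<k} \<subseteq> {i. i < n \<and> Q (xs ! i)}"
    proof
      fix i assume "i \<in> {..<k}"
      then have "i \<le> k - 1" "k - 1 < n" using assms by auto
      then have "xs ! i \<le> xs ! (k - 1)" using sorted_nth_mono[OF srt] len by auto
      then show "i \<in> {i. i < n \<and> Q (xs ! i)}" using q down \<open>i \<le> k - 1\<close> \<open>k - 1 < n\<close> by auto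
    qed
    from card_mono[OF fin this] show "k \<le> card {i. i < n \<and> Q (xs ! i)}" by simp
  next
    assume c: "k \<le> card {i. i < n \<and> Q (xs ! i)}"
    show "Q (xs ! (k - 1))"
    proof (rule ccontr)
      assume nq: "\<not> Q (xs ! (k - 1))"
      have "{i. i < n \<and> Q (xs ! i)} \<subseteq> {..<k - 1}"
      proof
        fix i assume i: "i \<in> {i. i < n \<and> Q (xs ! i)}"
        show "i \<in> {..<k - 1}"
        proof (rule ccontr)
          assume "i \<notin> {..<k - 1}"
          then have "xs ! (k - 1) \<le> xs ! i" using sorted_nth_mono[OF srt] len i by auto
          then show False using nq down i by auto
        qed
      qed
      from card_mono[OF _ this] have "card {i. i < n \<and> Q (xs ! i)} \<le> k - 1" by simp
      then show False using c assms by auto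
    qed
  qed
  then show ?thesis unfolding kmin_def xs_def[symmetric] c1 .
qed

lemma kmin_in:
  assumes "1 \<le> k" "k \<le> n"
  shows "kmin n k a \<in> a ` {..<n}"
proof -
  have "sort (map a [0..<n]) ! (k - 1) \<in> set (sort (map a [0..<n]))"
    using assms by (intro nth_mem) simp
  then show ?thesis unfolding kmin_def by auto
qed

lemma odds_mono: "0 \<le> a \<Longrightarrow> a \<le> b \<Longrightarrow> b \<le> 1 \<Longrightarrow> odds a \<le> odds b"
  unfolding odds_def by (auto simp: frac_le)

lemma odds_iter:
  assumes C: "condC K F" and K: "K > 1" and t: "t > 0"
  shows "odds (F (K ^ j * t)) \<ge> ereal (2 ^ j) * odds (F t)"
proof (induction j)
  case 0
  then show ?case by simp
next
  case (Suc j)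
  have pos: "K ^ j * t > 0" using K t by simp
  have "ereal (2 ^ Suc j) * odds (F t) = 2 * (ereal (2 ^ j) * odds (F t))"
    by (metis times_ereal.simps(1) mult.assoc power_Suc numeral_eq_ereal)
  also have "\<dots> \<le> 2 * odds (F (K ^ j * t))"
    using Suc.IH by (intro ereal_mult_left_mono) auto
  also have "\<dots> \<le> odds (F (K * (K ^ j * t)))" using C pos unfolding condC_def by auto
  finally show ?case by (simp add: mult.assoc)
qed

lemma odds_cross:
  assumes "c > 0" "0 \<le> p" "p \<le> 1" "0 \<le> u" "u \<le> 1" and o: "odds p \<ge> ereal c * odds u"
  shows "c * u * (1 - p) \<le> p * (1 - u)"
proof (cases "u = 1")
  case True
  then have "odds p = \<infinity>" using o \<open>c > 0\<close> by (simp add: odds_def)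
  then have "p = 1" unfolding odds_def by (auto split: if_splits)
  then show ?thesis using True by simp
next
  case False
  then have u1: "u < 1" using assms by simp
  show ?thesis
  proof (cases "p = 1")
    case True
    then show ?thesis using assms by simp
  next
    case False
    then have p1: "p < 1" using assms by simp
    from o have "c * (u / (1 - u)) \<le> p / (1 - p)" using u1 p1 by (simp add: odds_def)
    then have "c * u / (1 - u) \<le> p / (1 - p)" by simp
    then show ?thesis using u1 p1 by (simp add: field_simps)
  qed
qed

lemma (in prob_space) zero_one:
  fixes Z :: "'a \<Rightarrow> real"
  assumes K: "K > 1" and Zm: "Z \<in> borel_measurable M"
    and C: "condC K (\<lambda>x. prob {\<omega>\<in>space M. Z \<omega> \<le> x})"
  shows "prob {\<omega>\<in>space M. Z \<omega> \<le> 0} = 0 \<or> prob {\<omega>\<in>space M. Z \<omega> \<le> 0} = 1"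
proof (rule ccontr)
  define F where "F x = prob {\<omega>\<in>space M. Z \<omega> \<le> x}" for x
  have C': "condC K F" using C unfolding F_def by simp
  have F01: "0 \<le> F x" "F x \<le> 1" for x unfolding F_def by (auto simp: measure_nonneg)
  assume "\<not> (prob {\<omega>\<in>space M. Z \<omega> \<le> 0} = 0 \<or> prob {\<omega>\<in>space M. Z \<omega> \<le> 0} = 1)"
  then have a: "0 < F 0" "F 0 < 1" using F01[of 0] unfolding F_def by (auto simp: less_le)
  have sets: "{\<omega>\<in>space M. Z \<omega> \<le> x} \<in> sets M" for x
    using measurable_sets[OF Zm, of "{..x}"] by (simp add: vimage_def Int_def conj_commute)
  have all1: "F x = 1" if x: "x > 0" for x
  proof (rule ccontr)
    assume "F x \<noteq> 1"
    then have x1: "F x < 1" using F01[of x] by (simp add: less_le)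
    define c where "c = F 0 / (1 - F 0)"
    have c0: "c > 0" using a by (simp add: c_def)
    obtain j :: nat where j: "F x / (1 - F x) / c < 2 ^ j" using real_arch_pow[of 2] by auto
    have Kj: "K ^ j > 0" using K by simp
    have xk: "0 < x / K ^ j" using x Kj by simp
    have sub: "{\<omega>\<in>space M. Z \<omega> \<le> 0} \<subseteq> {\<omega>\<in>space M. Z \<omega> \<le> x / K ^ j}" using xk by auto
    have "F 0 \<le> F (x / K ^ j)" unfolding F_def by (rule finite_measure_mono[OF sub sets])
    then have "odds (F 0) \<le> odds (F (x / K ^ j))"
      using F01 by (intro odds_mono) auto
    then have "ereal (2 ^ j) * odds (F 0) \<le> ereal (2 ^ j) * odds (F (x / K ^ j))"
      by (intro ereal_mult_left_mono) auto
    also have "\<dots> \<le> odds (F (K ^ j * (x / K ^ j)))"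
      using odds_iter[OF C' K, of "x / K ^ j" j] x Kj by simp
    also have "K ^ j * (x / K ^ j) = x" using Kj by (metis less_irrefl nonzero_mult_div_cancel_left times_divide_eq_right)
    finally have "2 ^ j * c \<le> F x / (1 - F x)"
      using a x1 unfolding odds_def c_def by auto
    moreover have "F x / (1 - F x) < 2 ^ j * c"
      using pos_divide_less_eq[OF c0, of "F x / (1 - F x)" "2 ^ j"] j by blast
    ultimately show False by (simp add: mult.commute)
  qed
  have "AE \<omega> in M. Z \<omega> \<le> 1 / real (Suc m)" for m
  proof -
    have "F (1 / real (Suc m)) = 1" by (rule all1) simp
    then show ?thesis using prob_Collect_eq_1[OF sets] unfolding F_def by simp
  qed
  then have "AE \<omega> in M. \<forall>m. Z \<omega> \<le> 1 / real (Suc m)" by (simp add: AE_all_countable)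
  then have "AE \<omega> in M. Z \<omega> \<le> 0"
  proof (rule AE_mp, intro AE_I2 impI)
    fix \<omega> assume h: "\<forall>m. Z \<omega> \<le> 1 / real (Suc m)"
    show "Z \<omega> \<le> 0"
    proof (rule ccontr)
      assume "\<not> Z \<omega> \<le> 0"
      then obtain m where m: "m > 0" "inverse (real m) < Z \<omega>" using ex_inverse_of_nat_less[of "Z \<omega>"] by auto
      then obtain m' where "m = Suc m'" using gr0_implies_Suc by blast
      then show False using h m by (auto simp: inverse_eq_divide) (metis not_less)
    qed
  qed
  then have "F 0 = 1" using prob_Collect_eq_1[OF sets] unfolding F_def by simp
  then show False using a by simp
qed

lemma exp1_ge: "exp (1::real) \<ge> 2.7"
  using e_approx_32 by (simp add: abs_if split: if_splits)

lemma exp_52: "exp (5/2::real) > 8"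
proof -
  have "exp (5/2::real) = exp 1 * exp 1 * exp (1/2)" by (simp flip: exp_add)
  moreover have B: "exp (1/2::real) \<ge> 3/2" using exp_ge_add_one_self[of "1/2::real"] by simp
  moreover have A: "exp 1 * exp 1 \<ge> (2.7::real) * 2.7" using exp1_ge by (intro mult_mono) auto
  moreover have "2.7 * 2.7 * (3/2) \<le> (exp 1 * exp 1) * exp (1/2::real)" by (rule mult_mono[OF A B]) auto
  ultimately have "exp (5/2::real) \<ge> 2.7 * 2.7 * (3/2)"
    by simp
  then show ?thesis by simp
qed

lemma exp_136: "exp (13/6::real) > 8"
proof -
  have "exp (13/6::real) = exp 1 * exp 1 * exp (1/6)" by (simp flip: exp_add)
  moreover have B: "exp (1/6::real) \<ge> 7/6" using exp_ge_add_one_self[of "1/6::real"] by simp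
  moreover have A: "exp 1 * exp 1 \<ge> (2.7::real) * 2.7" using exp1_ge by (intro mult_mono) auto
  moreover have "2.7 * 2.7 * (7/6) \<le> (exp 1 * exp 1) * exp (1/6::real)" by (rule mult_mono[OF A B]) auto
  ultimately have "exp (13/6::real) \<ge> 2.7 * 2.7 * (7/6)"
    by simp
  then show ?thesis by simp
qed

lemma ln2_ge: "ln (2::real) \<ge> 2/3" by (rule ln2_ge_two_thirds)

lemma final_ineq:
  fixes j :: nat and L a :: real
  assumes "L \<le> real j + 1" "a \<ge> 4"
  shows "(1 / 2 ^ j) powr (1/2) \<le> 4 * exp (- L / a)"
proof -
  have l2: "ln (2::real) \<ge> 2/3" by (rule ln2_ge)
  have "(1 / 2 ^ j :: real) powr (1/2) = exp (- (real j * ln 2) / 2)"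
    by (simp add: powr_def ln_div ln_realpow)
  also have "\<dots> \<le> exp (2 * ln 2 - (real j + 1) / a)"
  proof -
    have "real j * ln 2 \<ge> real j * (2/3)" using l2 by (intro mult_left_mono) auto
    moreover have "(real j + 1) / a \<le> (real j + 1) / 4" using assms by (intro divide_left_mono) auto
    moreover have "(real j + 1) / 4 = real j / 4 + 1 / 4" by simp
    ultimately have "- (real j * ln 2) / 2 \<le> 2 * ln 2 - (real j + 1) / a" using l2 by linarith
    then show ?thesis by simp
  qed
  also have "\<dots> \<le> exp (2 * ln 2 - L / a)"
    using assms by (simp add: divide_right_mono)
  also have "\<dots> = 4 * exp (- L / a)"
  proof -
    have "exp (2 * ln 2 :: real) = exp (ln 2 + ln 2)" by simp
    also have "\<dots> = 4" by (simp only: exp_add) simp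
    finally have e4: "exp (2 * ln 2 :: real) = 4" .
    show ?thesis by (simp add: exp_diff e4 exp_minus divide_inverse)
  qed
  finally show ?thesis .
qed

lemma mid1: "(a::real) < b \<Longrightarrow> a < (a + b) / 2" by (simp add: field_simps)
lemma mid2: "(a::real) < b \<Longrightarrow> (a + b) / 2 < b" by (simp add: field_simps)

lemma cross_flip:
  fixes p u :: real and j :: nat
  assumes "2 ^ j * u * (1 - p) \<le> p * (1 - u)"
  shows "(1 - p) * (1 - (1 - u)) \<le> (1 / 2 ^ j) * (1 - u) * (1 - (1 - p))"
proof -
  have "(1 - p) * (1 - (1 - u)) = (1 / 2 ^ j) * (2 ^ j * u * (1 - p))" by simp
  also have "\<dots> \<le> (1 / 2 ^ j) * (p * (1 - u))" using assms by (intro mult_left_mono) auto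
  also have "\<dots> = (1 / 2 ^ j) * (1 - u) * (1 - (1 - p))" by simp
  finally show ?thesis .
qed

theorem theorem3p1:
  fixes P :: "'a measure" and X :: "nat \<Rightarrow> 'a \<Rightarrow> real" and K q :: real and n k :: nat
  assumes "prob_space P"
    and "K > 1"
    and "1 \<le> k" and "k \<le> n"
    and "prob_space.indep_vars P (\<lambda>_. borel) X {..<n}"
    and "\<forall>i<n. \<forall>\<omega>\<in>space P. X i \<omega> \<ge> 0"
    and "\<forall>i<n. condC K (\<lambda>x. measure P {\<omega>\<in>space P. X i \<omega> \<le> x})"
    and "is_quantile (\<lambda>x. (\<Sum>i<n. measure P {\<omega>\<in>space P. X i \<omega> \<le> x}) / real n)
                     ((real k - 1/2) / real n) q"
  shows "(\<forall>t. 0 < t \<and> t < K powr (-5) \<longrightarrow>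
            measure P {\<omega>\<in>space P. kmin n k (\<lambda>i. X i \<omega>) < t * q}
              \<le> 4 * t powr (1 / (4 * ln K)))
       \<and> (\<forall>t. t > K powr 5 \<longrightarrow>
            measure P {\<omega>\<in>space P. kmin n k (\<lambda>i. X i \<omega>) > t * q}
              \<le> 4 * t powr (- 1 / (6 * ln K)))
       \<and> (\<forall>m. is_median P (\<lambda>\<omega>. kmin n k (\<lambda>i. X i \<omega>)) m \<longrightarrow>
            K powr (-10) * q \<le> m \<and> m \<le> K powr 13 * q)"
proof -
  interpret prob_space P by (rule assms(1))
  have K: "K > 1" using assms(2) .
  have lnK: "ln K > 0" using K by simp
  have kk: "1 \<le> k" "k \<le> n" using assms(3,4) by auto
  have n0: "n > 0" using kk by simp
  have rv: "\<And>i. i < n \<Longrightarrow> X i \<in> borel_measurable P"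
    using assms(5) unfolding indep_vars_def2 by auto
  have Xnn: "\<And>i \<omega>. i < n \<Longrightarrow> \<omega> \<in> space P \<Longrightarrow> X i \<omega> \<ge> 0" using assms(6) by auto
  define F where "F i x = measure P {\<omega>\<in>space P. X i \<omega> \<le> x}" for i x
  have Fsets: "{\<omega>\<in>space P. X i \<omega> \<le> x} \<in> sets P" if "i < n" for i x
    using measurable_sets[OF rv[OF that], of "{..x}"] by (simp add: vimage_def Int_def conj_commute)
  have F01: "0 \<le> F i x" "F i x \<le> 1" for i x unfolding F_def by (auto simp: measure_nonneg)
  have Fmono: "F i x \<le> F i y" if "i < n" "x \<le> y" for i x y
    unfolding F_def using that by (intro finite_measure_mono Fsets) auto
  have CF: "condC K (F i)" if "i < n" for i
    using assms(7) that unfolding F_def by auto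
  have Q: "(\<forall>s<q. (\<Sum>i<n. F i s) / real n \<le> (real k - 1/2) / real n) \<and> (\<Sum>i<n. F i q) / real n \<ge> (real k - 1/2) / real n"
    using assms(8) unfolding is_quantile_def F_def by simp
  have Ssmall: "(\<Sum>i<n. F i s) \<le> real k - 1/2" if "s < q" for s
    using Q that n0 by (auto simp: divide_le_cancel)
  have Sbig: "(\<Sum>i<n. F i q) \<ge> real k - 1/2"
    using Q n0 by (auto simp: divide_le_cancel)
  have q0: "q \<ge> 0"
  proof (rule ccontr)
    assume "\<not> q \<ge> 0"
    then have "F i q = 0" if "i < n" for i
    proof -
      have "{\<omega>\<in>space P. X i \<omega> \<le> q} = {}" using Xnn[OF that] \<open>\<not> q \<ge> 0\<close> by force
      then show ?thesis unfolding F_def by (metis measure_empty)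
    qed
    then have "(\<Sum>i<n. F i q) = 0" by simp
    then show False using Sbig kk by simp
  qed
  define Y where "Y \<omega> = kmin n k (\<lambda>i. X i \<omega>)" for \<omega>
  have Y0: "Y \<omega> \<ge> 0" if "\<omega> \<in> space P" for \<omega>
    using kmin_in[OF kk, of "\<lambda>i. X i \<omega>"] Xnn that unfolding Y_def by auto
  have PC: "{\<omega>\<in>space P. k' \<le> card {i\<in>{..<n}. X i \<omega> \<in> A i}} \<in> sets P \<and>
      measure P {\<omega>\<in>space P. k' \<le> card {i\<in>{..<n}. X i \<omega> \<in> A i}}
         = G {..<n} k' (\<lambda>i. measure P {\<omega>\<in>space P. X i \<omega> \<in> A i})"
    if "\<And>i. i \<in> {..<n} \<Longrightarrow> A i \<in> sets borel" for A k'
    by (rule prob_count[OF assms(5)]) (use n0 that in auto)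
  have Yle: "{\<omega>\<in>space P. Y \<omega> \<le> x} = {\<omega>\<in>space P. k \<le> card {i\<in>{..<n}. X i \<omega> \<in> {..x}}}" for x
  proof -
    have e1: "{i\<in>{..<n}. X i \<omega> \<in> {..x}} = {i. i < n \<and> X i \<omega> \<le> x}" for \<omega> by auto
    have e2: "Y \<omega> \<le> x \<longleftrightarrow> k \<le> card {i. i < n \<and> X i \<omega> \<le> x}" for \<omega>
      unfolding Y_def by (rule kmin_iff[OF kk]) auto
    show ?thesis unfolding e1 e2 ..
  qed
  have Ylt: "{\<omega>\<in>space P. Y \<omega> < x} = {\<omega>\<in>space P. k \<le> card {i\<in>{..<n}. X i \<omega> \<in> {..<x}}}" for x
  proof -
    have e1: "{i\<in>{..<n}. X i \<omega> \<in> {..<x}} = {i. i < n \<and> X i \<omega> < x}" for \<omega> by auto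
    have e2: "Y \<omega> < x \<longleftrightarrow> k \<le> card {i. i < n \<and> X i \<omega> < x}" for \<omega>
      unfolding Y_def by (rule kmin_iff[OF kk]) auto
    show ?thesis unfolding e1 e2 ..
  qed
  have Ygt: "{\<omega>\<in>space P. Y \<omega> > x} = {\<omega>\<in>space P. n - k + 1 \<le> card {i\<in>{..<n}. X i \<omega> \<in> {x<..}}}" for x
  proof -
    have "Y \<omega> > x \<longleftrightarrow> n - k + 1 \<le> card {i\<in>{..<n}. X i \<omega> \<in> {x<..}}" for \<omega>
    proof -
      have c: "card {i\<in>{..<n}. X i \<omega> \<in> {x<..}} = n - card {i. i < n \<and> X i \<omega> \<le> x}"
      proof -
        have "{i\<in>{..<n}. X i \<omega> \<in> {x<..}} = {..<n} - {i. i < n \<and> X i \<omega> \<le> x}" by auto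
        moreover have "card ({..<n} - {i. i < n \<and> X i \<omega> \<le> x}) = card {..<n} - card {i. i < n \<and> X i \<omega> \<le> x}"
          by (rule card_Diff_subset) auto
        ultimately show ?thesis by simp
      qed
      have cle: "card {i. i < n \<and> X i \<omega> \<le> x} \<le> n"
        using card_mono[of "{..<n}" "{i. i < n \<and> X i \<omega> \<le> x}"] by auto
      have e2: "Y \<omega> \<le> x \<longleftrightarrow> k \<le> card {i. i < n \<and> X i \<omega> \<le> x}"
        unfolding Y_def by (rule kmin_iff[OF kk]) auto
      have "Y \<omega> > x \<longleftrightarrow> \<not> (k \<le> card {i. i < n \<and> X i \<omega> \<le> x})"
        unfolding e2[symmetric] by auto
      then show ?thesis unfolding c using cle kk by linarith
    qed
    then show ?thesis by blast
  qed
  have Ysets_lt: "{\<omega>\<in>space P. Y \<omega> < x} \<in> sets P" for x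
    unfolding Ylt by (rule conjunct1[OF PC]) simp
  have Ysets_le: "{\<omega>\<in>space P. Y \<omega> \<le> x} \<in> sets P" for x
    unfolding Yle by (rule conjunct1[OF PC]) simp

  have part1: "\<forall>t. 0 < t \<and> t < K powr (-5) \<longrightarrow>
            measure P {\<omega>\<in>space P. Y \<omega> < t * q} \<le> 4 * t powr (1 / (4 * ln K))"
  proof (intro allI impI)
    fix t assume t: "0 < t \<and> t < K powr (-5)"
    have t1: "t < 1" using t powr_less_one[OF K, of "-5"] by simp
    have rhs0: "0 \<le> 4 * t powr (1 / (4 * ln K))" by simp
    show "measure P {\<omega>\<in>space P. Y \<omega> < t * q} \<le> 4 * t powr (1 / (4 * ln K))"
    proof (cases "q = 0")
      case True
      then have "{\<omega>\<in>space P. Y \<omega> < t * q} = {}" using Y0 by force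
      then show ?thesis using rhs0 by (metis measure_empty)
    next
      case False
      then have qpos: "q > 0" using q0 by simp
      define L where "L = - ln t / ln K"
      have lnt: "ln t < 0" using t t1 by simp
      have Lpos: "L > 0" unfolding L_def using lnt lnK by (simp add: divide_neg_pos)
      define j where "j = nat \<lceil>L\<rceil> - 1"
      have "real_of_int \<lceil>L\<rceil> > 0" using Lpos le_of_int_ceiling[of L] by linarith
      then have cL: "\<lceil>L\<rceil> \<ge> 1" by simp
      have jr: "real j = real_of_int \<lceil>L\<rceil> - 1"
      proof -
        have n1: "nat \<lceil>L\<rceil> \<ge> 1" using cL by linarith
        have "real j = real (nat \<lceil>L\<rceil>) - 1" unfolding j_def using n1 by (simp add: of_nat_diff)
        also have "real (nat \<lceil>L\<rceil>) = real_of_int \<lceil>L\<rceil>" using cL by (intro of_nat_nat) linarith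
        finally show ?thesis .
      qed
      have jL: "real j < L" "L \<le> real j + 1" using jr ceiling_correct[of L] by linarith+
      define s where "s = t * q"
      have s0: "s > 0" unfolding s_def using t qpos by simp
      have Kjt: "K ^ j * t < 1"
      proof -
        have "ln (K ^ j * t) = real j * ln K + ln t" using K t by (simp add: ln_mult ln_realpow)
        also have "\<dots> < 0"
        proof -
          have "real j * ln K < L * ln K" using jL lnK by simp
          also have "L * ln K = - ln t" unfolding L_def using lnK by simp
          finally show ?thesis by simp
        qed
        finally show ?thesis using K t by (simp add: ln_less_zero_iff)
      qed
      have "K ^ j * s = (K ^ j * t) * q" unfolding s_def by (simp add: mult.assoc)
      also have "\<dots> < 1 * q" by (rule mult_strict_right_mono[OF Kjt qpos])
      finally have Kjs: "K ^ j * s < q" by simp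
      define e :: real where "e = 1 / 2 ^ j"
      have e0: "0 < e" "e \<le> 1" unfolding e_def by auto
      have sub: "{\<omega>\<in>space P. Y \<omega> < s} \<subseteq> {\<omega>\<in>space P. k \<le> card {i\<in>{..<n}. X i \<omega> \<in> {..s}}}"
      proof -
        have "{\<omega>\<in>space P. Y \<omega> < s} \<subseteq> {\<omega>\<in>space P. Y \<omega> \<le> s}" by auto
        then show ?thesis unfolding Yle .
      qed
      have PCs: "{\<omega>\<in>space P. k \<le> card {i\<in>{..<n}. X i \<omega> \<in> {..s}}} \<in> sets P \<and>
          measure P {\<omega>\<in>space P. k \<le> card {i\<in>{..<n}. X i \<omega> \<in> {..s}}}
           = G {..<n} k (\<lambda>i. measure P {\<omega>\<in>space P. X i \<omega> \<in> {..s}})"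
        by (rule PC) simp
      have "measure P {\<omega>\<in>space P. Y \<omega> < s} \<le> measure P {\<omega>\<in>space P. k \<le> card {i\<in>{..<n}. X i \<omega> \<in> {..s}}}"
        by (rule finite_measure_mono[OF sub conjunct1[OF PCs]])
      also have "\<dots> = G {..<n} k (\<lambda>i. F i s)"
      proof -
        have eqG: "(\<lambda>i. measure P {\<omega>\<in>space P. X i \<omega> \<in> {..s}}) = (\<lambda>i. F i s)"
          unfolding F_def by simp
        show ?thesis unfolding eqG[symmetric] by (rule conjunct2[OF PCs])
      qed
      also have "\<dots> \<le> e powr (1/2)"
      proof (rule G_bound[where u = "\<lambda>i. F i (K ^ j * s)"])
        show "\<forall>i\<in>{..<n}. 0 \<le> F i s \<and> F i s \<le> 1 \<and> 0 \<le> F i (K ^ j * s) \<and> F i (K ^ j * s) \<le> 1 \<and>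
                F i s * (1 - F i (K ^ j * s)) \<le> e * F i (K ^ j * s) * (1 - F i s)"
        proof
          fix i assume i: "i \<in> {..<n}"
          have i': "i < n" using i by simp
          have oo: "odds (F i (K ^ j * s)) \<ge> ereal (2 ^ j) * odds (F i s)"
            by (rule odds_iter[OF CF[OF i'] K s0])
          have cr: "2 ^ j * F i s * (1 - F i (K ^ j * s)) \<le> F i (K ^ j * s) * (1 - F i s)"
            by (rule odds_cross[OF _ F01(1) F01(2) F01(1) F01(2) oo]) simp
          have "F i s * (1 - F i (K ^ j * s)) = e * (2 ^ j * F i s * (1 - F i (K ^ j * s)))"
            unfolding e_def by simp
          also have "\<dots> \<le> e * (F i (K ^ j * s) * (1 - F i s))"
            using cr e0 by (intro mult_left_mono) auto
          finally show "0 \<le> F i s \<and> F i s \<le> 1 \<and> 0 \<le> F i (K ^ j * s) \<and> F i (K ^ j * s) \<le> 1 \<and>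
                F i s * (1 - F i (K ^ j * s)) \<le> e * F i (K ^ j * s) * (1 - F i s)"
            using F01 by (simp add: mult.assoc)
        qed
        show "(\<Sum>i<n. F i (K ^ j * s)) \<le> real k - 1/2" by (rule Ssmall[OF Kjs])
      qed (use e0 in auto)
      also have "\<dots> \<le> 4 * exp (- L / 4)" unfolding e_def by (rule final_ineq) (use jL in auto)
      also have "exp (- L / 4) = t powr (1 / (4 * ln K))"
        unfolding L_def powr_def using t by simp
      finally show ?thesis unfolding s_def .
    qed
  qed

  have part2: "\<forall>t. t > K powr 5 \<longrightarrow>
            measure P {\<omega>\<in>space P. Y \<omega> > t * q} \<le> 4 * t powr (- 1 / (6 * ln K))"
  proof (intro allI impI)
    fix t assume t: "t > K powr 5"
    have "K powr 5 = K ^ 5" using K by (simp add: powr_numeral)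
    moreover have "K ^ 5 > 1" using K by (simp add: one_less_power)
    ultimately have t1: "t > 1" using t by simp
    define L where "L = ln t / ln K"
    have lnt: "ln t > 0" using t1 by simp
    have Lpos: "L > 0" unfolding L_def using lnt lnK by simp
    define j where "j = nat \<lfloor>L\<rfloor>"
    have fl0: "\<lfloor>L\<rfloor> \<ge> 0" using Lpos by simp
    have jr: "real j = real_of_int \<lfloor>L\<rfloor>" unfolding j_def using fl0 by (intro of_nat_nat)
    have jL: "real j \<le> L" "L \<le> real j + 1" using jr of_int_floor_le[of L] real_of_int_floor_add_one_ge[of L] by linarith+
    define s where "s = t * q"
    have Kjt: "K ^ j \<le> t"
    proof -
      have "ln (K ^ j) = real j * ln K" by (simp add: ln_realpow)
      also have "\<dots> \<le> L * ln K" using jL lnK by (intro mult_right_mono) auto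
      also have "L * ln K = ln t" unfolding L_def using lnK by simp
      finally show ?thesis using K t1 by simp
    qed
    define e :: real where "e = 1 / 2 ^ j"
    have e0: "0 < e" "e \<le> 1" unfolding e_def by auto
    have PCs: "{\<omega>\<in>space P. n - k + 1 \<le> card {i\<in>{..<n}. X i \<omega> \<in> {s<..}}} \<in> sets P \<and>
          measure P {\<omega>\<in>space P. n - k + 1 \<le> card {i\<in>{..<n}. X i \<omega> \<in> {s<..}}}
           = G {..<n} (n - k + 1) (\<lambda>i. measure P {\<omega>\<in>space P. X i \<omega> \<in> {s<..}})"
      by (rule PC) simp
    have eqG: "(\<lambda>i. measure P {\<omega>\<in>space P. X i \<omega> \<in> {s<..}}) = (\<lambda>i. if i < n then 1 - F i s else measure P {\<omega>\<in>space P. X i \<omega> \<in> {s<..}})"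
    proof
      fix i
      show "measure P {\<omega>\<in>space P. X i \<omega> \<in> {s<..}} = (if i < n then 1 - F i s else measure P {\<omega>\<in>space P. X i \<omega> \<in> {s<..}})"
      proof (cases "i < n")
        case True
        have "{\<omega>\<in>space P. X i \<omega> \<in> {s<..}} = space P - {\<omega>\<in>space P. X i \<omega> \<le> s}" by auto
        then show ?thesis using prob_compl[OF Fsets[OF True]] True unfolding F_def by simp
      qed simp
    qed
    have Geq: "G {..<n} (n - k + 1) (\<lambda>i. measure P {\<omega>\<in>space P. X i \<omega> \<in> {s<..}}) = G {..<n} (n - k + 1) (\<lambda>i. 1 - F i s)"
      unfolding G_def eqG by (intro sum.cong refl arg_cong2[where f="(*)"] prod.cong) auto
    have "measure P {\<omega>\<in>space P. Y \<omega> > s} = G {..<n} (n - k + 1) (\<lambda>i. 1 - F i s)"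
      unfolding Ygt Geq[symmetric] by (rule conjunct2[OF PCs])
    also have "\<dots> \<le> e powr (1/2)"
    proof (rule G_bound[where u = "\<lambda>i. 1 - F i q"])
      show "\<forall>i\<in>{..<n}. 0 \<le> 1 - F i s \<and> 1 - F i s \<le> 1 \<and> 0 \<le> 1 - F i q \<and> 1 - F i q \<le> 1 \<and>
                (1 - F i s) * (1 - (1 - F i q)) \<le> e * (1 - F i q) * (1 - (1 - F i s))"
      proof
        fix i assume i: "i \<in> {..<n}"
        have i': "i < n" using i by simp
        have cr: "(1 - F i s) * (1 - (1 - F i q)) \<le> e * (1 - F i q) * (1 - (1 - F i s))"
        proof (cases "q = 0")
          case True
          have "F i 0 = 0 \<or> F i 0 = 1"
            using zero_one[OF K rv[OF i']] assms(7) i' unfolding F_def by auto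
          then show ?thesis using True unfolding s_def by auto
        next
          case False
          then have qpos: "q > 0" using q0 by simp
          have "odds (F i s) \<ge> odds (F i (K ^ j * q))"
            using Fmono[OF i', of "K ^ j * q" s] Kjt qpos F01 unfolding s_def
            by (intro odds_mono) (auto intro: mult_right_mono)
          moreover have "odds (F i (K ^ j * q)) \<ge> ereal (2 ^ j) * odds (F i q)"
            by (rule odds_iter[OF CF[OF i'] K qpos])
          ultimately have oo: "odds (F i s) \<ge> ereal (2 ^ j) * odds (F i q)" by (rule order_trans[rotated])
          have "2 ^ j * F i q * (1 - F i s) \<le> F i s * (1 - F i q)"
            by (rule odds_cross[OF _ F01(1) F01(2) F01(1) F01(2) oo]) simp
          then show ?thesis unfolding e_def by (rule cross_flip)
        qed
        show "0 \<le> 1 - F i s \<and> 1 - F i s \<le> 1 \<and> 0 \<le> 1 - F i q \<and> 1 - F i q \<le> 1 \<and>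
                (1 - F i s) * (1 - (1 - F i q)) \<le> e * (1 - F i q) * (1 - (1 - F i s))"
          using cr F01[of i s] F01[of i q] by simp
      qed
      have "(\<Sum>i<n. 1 - F i q) = real n - (\<Sum>i<n. F i q)" by (simp add: sum_subtractf)
      also have "\<dots> \<le> real (n - k + 1) - 1/2" using Sbig kk by (simp add: of_nat_diff)
      finally show "(\<Sum>i<n. 1 - F i q) \<le> real (n - k + 1) - 1/2" .
    qed (use e0 in auto)
    also have "\<dots> \<le> 4 * exp (- L / 6)" unfolding e_def by (rule final_ineq) (use jL in auto)
    also have "exp (- L / 6) = t powr (- 1 / (6 * ln K))"
      unfolding L_def powr_def using t1 by simp
    finally show "measure P {\<omega>\<in>space P. Y \<omega> > t * q} \<le> 4 * t powr (- 1 / (6 * ln K))" unfolding s_def .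
  qed

  have Kp10: "0 < K powr (-10)" "K powr (-10) < K powr (-5)"
    using K by (auto intro: powr_less_mono)
  have Kp13: "K powr 5 < K powr 13" "0 < K powr 13"
    using K by (auto intro: powr_less_mono)
  have part3: "\<forall>m. is_median P Y m \<longrightarrow> K powr (-10) * q \<le> m \<and> m \<le> K powr 13 * q"
  proof (intro allI impI)
    fix m assume med: "is_median P Y m"
    have mlt: "measure P {\<omega>\<in>space P. Y \<omega> < m} \<le> 1/2" and mle: "measure P {\<omega>\<in>space P. Y \<omega> \<le> m} \<ge> 1/2"
      using med unfolding is_median_def by auto
    have lower: "K powr (-10) * q \<le> m"
    proof (rule ccontr)
      assume "\<not> K powr (-10) * q \<le> m"
      then have mq: "m < K powr (-10) * q" by simp
      show False
      proof (cases "m < 0")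
        case True
        then have "{\<omega>\<in>space P. Y \<omega> \<le> m} = {}" using Y0 by force
        then have "measure P {\<omega>\<in>space P. Y \<omega> \<le> m} = 0" by (metis measure_empty)
        then show False using mle by simp
      next
        case False
        then have m0: "m \<ge> 0" by simp
        have qpos: "q > 0"
        proof (rule ccontr)
          assume "\<not> q > 0"
          then have "q = 0" using q0 by simp
          then show False using mq m0 by simp
        qed
        define t where "t = (m / q + K powr (-10)) / 2"
        have mq': "m / q < K powr (-10)" using mq qpos by (simp add: divide_less_eq)
        have mq0: "0 \<le> m / q" using m0 qpos by simp
        have t0: "0 < t" using add_nonneg_pos[OF mq0 Kp10(1)] unfolding t_def by (simp only: half_gt_zero)
        have tK: "t < K powr (-10)" unfolding t_def by (rule mid2[OF mq'])
        have "m / q < t" unfolding t_def by (rule mid1[OF mq'])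
        then have tq: "m < t * q" using qpos by (simp add: divide_less_eq)
        have "1/2 \<le> measure P {\<omega>\<in>space P. Y \<omega> \<le> m}" by (rule mle)
        also have "\<dots> \<le> measure P {\<omega>\<in>space P. Y \<omega> < t * q}"
          using tq by (intro finite_measure_mono[OF _ Ysets_lt]) auto
        also have "\<dots> \<le> 4 * t powr (1 / (4 * ln K))" using part1 t0 tK Kp10 by auto
        also have "\<dots> \<le> 4 * (K powr (-10)) powr (1 / (4 * ln K))"
          using t0 tK lnK by (intro mult_left_mono powr_mono2) auto
        also have "(K powr (-10)) powr (1 / (4 * ln K)) = exp (- (5/2))"
          using K lnK by (simp add: powr_powr powr_def)
        finally have "1/2 \<le> 4 * exp (- (5/2::real))" .
        moreover have "exp (- (5/2::real)) < 1/8" using exp_52 by (simp add: exp_minus inverse_eq_divide divide_less_eq)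
        ultimately show False by simp
      qed
    qed
    have upper: "m \<le> K powr 13 * q"
    proof (rule ccontr)
      assume "\<not> m \<le> K powr 13 * q"
      then have mq: "K powr 13 * q < m" by simp
      obtain t where t: "t > K powr 13" "t * q < m"
      proof (cases "q = 0")
        case True
        then show ?thesis using that[of "K powr 13 + 1"] mq by simp
      next
        case False
        then have qpos: "q > 0" using q0 by simp
        have mq': "K powr 13 < m / q" using mq qpos by (simp add: less_divide_eq)
        define t where "t = (K powr 13 + m / q) / 2"
        have "t > K powr 13" "t < m / q" unfolding t_def by (rule mid1[OF mq'], rule mid2[OF mq'])
        then show ?thesis using that[of t] qpos by (simp add: less_divide_eq)
      qed
      have "measure P {\<omega>\<in>space P. Y \<omega> > t * q} \<le> 4 * t powr (- 1 / (6 * ln K))"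
        using part2 t Kp13 by auto
      also have "\<dots> \<le> 4 * (K powr 13) powr (- 1 / (6 * ln K))"
        using t Kp13 lnK by (intro mult_left_mono powr_mono2') auto
      also have "(K powr 13) powr (- 1 / (6 * ln K)) = exp (- (13/6))"
        using K lnK by (simp add: powr_powr powr_def)
      finally have g: "measure P {\<omega>\<in>space P. Y \<omega> > t * q} \<le> 4 * exp (- (13/6::real))" .
      have "exp (- (13/6::real)) < 1/8" using exp_136 by (simp add: exp_minus inverse_eq_divide divide_less_eq)
      with g have g2: "measure P {\<omega>\<in>space P. Y \<omega> > t * q} < 1/2" by simp
      have "{\<omega>\<in>space P. Y \<omega> > t * q} = space P - {\<omega>\<in>space P. Y \<omega> \<le> t * q}" by auto
      then have "measure P {\<omega>\<in>space P. Y \<omega> > t * q} = 1 - measure P {\<omega>\<in>space P. Y \<omega> \<le> t * q}"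
        using prob_compl[OF Ysets_le] by simp
      with g2 have "measure P {\<omega>\<in>space P. Y \<omega> \<le> t * q} > 1/2" by simp
      moreover have "measure P {\<omega>\<in>space P. Y \<omega> \<le> t * q} \<le> measure P {\<omega>\<in>space P. Y \<omega> < m}"
        using t by (intro finite_measure_mono[OF _ Ysets_lt]) auto
      ultimately show False using mlt by simp
    qed
    show "K powr (-10) * q \<le> m \<and> m \<le> K powr 13 * q" using lower upper by simp
  qed
  have Yapp: "\<And>\<omega>. kmin n k (\<lambda>i. X i \<omega>) = Y \<omega>" by (simp add: Y_def)
  show ?thesis unfolding Yapp using part1 part2 part3 by blast
qed

end
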